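(* Let $f:\mathbb{R}^n\times\mathbb{R}^p\to[-\infty,\infty]$ be a proper nearly convex function and let $\mathcal{P}_2(x,y)=y$. Suppose $0\in\operatorname{ri}\big(\mathcal{P}_2(\operatorname{dom} f)\big)$. Then $\mathcal{V}=\mathcal{V}_d$, where $\mathcal{V}=\inf\{f(x,0):x\in\mathbb{R}^n\}$ and $\mathcal{V}_d=\sup\{-f^*(0,y^* ):y^*\in\mathbb{R}^p\}$.
   Context: A set $\Omega$ is nearly convex if there is a convex set $C$ with $C\subset\Omega\subset\overline{C}$; $\operatorname{ri}\Omega=\{a\in\Omega:\exists\delta>0,\ B(a;\delta)\cap\operatorname{aff}\Omega\subset\Omega\}$. A function is nearly convex if its epigraph is nearly convex, proper if its domain $\{f<\infty\}$ is nonempty and $f>-\infty$. Fenchel conjugate $f^*(u,v)=\sup_{(x,y)}\{\langle u,x\rangle+\langle v,y\rangle-f(x,y)\}$. *)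

theory Defs
  imports "HOL-Analysis.Analysis" "HOL-Library.Extended_Real"
begin

definition nearly_convex :: "'a::real_normed_vector set \<Rightarrow> bool" where
  "nearly_convex S \<longleftrightarrow> (\<exists>C. convex C \<and> C \<subseteq> S \<and> S \<subseteq> closure C)"

definition ri :: "'a::real_normed_vector set \<Rightarrow> 'a set" where
  "ri S = {a \<in> S. \<exists>\<delta>>0. ball a \<delta> \<inter> affine hull S \<subseteq> S}"

definition epi :: "('a \<Rightarrow> ereal) \<Rightarrow> ('a \<times> real) set" where
  "epi f = {(x, t). f x \<le> ereal t}"

definition edom :: "('a \<Rightarrow> ereal) \<Rightarrow> 'a set" where
  "edom f = {x. f x < \<infinity>}"

definition proper_fun :: "('a \<Rightarrow> ereal) \<Rightarrow> bool" where
  "proper_fun f \<longleftrightarrow> edom f \<noteq> {} \<and> (\<forall>x. f x > -\<infinity>)"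

definition nearly_convex_fun :: "('a::real_normed_vector \<Rightarrow> ereal) \<Rightarrow> bool" where
  "nearly_convex_fun f \<longleftrightarrow> nearly_convex (epi f)"

definition fconj :: "((real^'n) \<times> (real^'p) \<Rightarrow> ereal) \<Rightarrow> (real^'n) \<times> (real^'p) \<Rightarrow> ereal" where
  "fconj f = (\<lambda>(u, v). SUP (x, y). ereal (inner u x + inner v y) - f (x, y))"

end

theory Submission
  imports Defs
begin

lemma weak_dual:
  fixes f :: "(real^'n) \<times> (real^'p) \<Rightarrow> ereal"
  shows "(SUP y. - fconj f (0, y)) \<le> (INF x. f (x, 0))"
proof (rule SUP_least, rule INF_greatest)
  fix y :: "real^'p" and x :: "real^'n"
  have "ereal (inner 0 x + inner y 0) - f (x, 0) \<le> fconj f (0, y)"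
    unfolding fconj_def by (auto intro!: SUP_upper2[where i="(x,0)"])
  then have "- f (x,0) \<le> fconj f (0, y)" by (simp add: zero_ereal_def[symmetric])
  then show "- fconj f (0, y) \<le> f (x, 0)"
    by (metis ereal_minus_le_minus ereal_uminus_uminus)
qed

theorem corollary7p2:
  fixes f :: "(real^'n) \<times> (real^'p) \<Rightarrow> ereal"
  assumes "proper_fun f"
    and "nearly_convex_fun f"
    and "0 \<in> ri (snd ` edom f)"
  shows "(INF x. f (x, 0)) = (SUP y. - fconj f (0, y))"
proof -
  have fgt: "\<And>z. f z > -\<infinity>" using assms(1) unfolding proper_fun_def by blast
  obtain x0 where x0: "f (x0, 0) < \<infinity>"
    using assms(3) by (auto simp: ri_def edom_def)
  define V where "V = (INF x. f (x, 0))"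
  show ?thesis
  proof (cases "V = -\<infinity>")
    case True
    then show ?thesis using weak_dual[of f] unfolding V_def by simp
  next
    case False
    have "V \<le> f (x0,0)" unfolding V_def by (rule INF_lower) simp
    with x0 False obtain v where v: "V = ereal v" by (cases V) auto
    have Vle: "\<And>x. ereal v \<le> f (x,0)" using v unfolding V_def by (metis INF_lower UNIV_I)
    obtain C where C: "convex C" "C \<subseteq> epi f" "epi f \<subseteq> closure C"
      using assms(2) by (auto simp: nearly_convex_fun_def nearly_convex_def)
    define D where "D = {(y, t). \<exists>x t0. ((x,y),t0) \<in> C \<and> t0 \<le> t}"
    have convD: "convex D"
      unfolding convex_def
    proof (intro ballI allI impI)
      fix p q :: "(real^'p) \<times> real" and u w :: real
      assume "p \<in> D" "q \<in> D" "0 \<le> u" "0 \<le> w" "u + w = 1"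
      then obtain x1 t1 x2 t2 where "((x1, fst p), t1) \<in> C" "t1 \<le> snd p"
        "((x2, fst q), t2) \<in> C" "t2 \<le> snd q"
        unfolding D_def by (cases p, cases q) auto
      moreover have "u *\<^sub>R ((x1, fst p), t1) + w *\<^sub>R ((x2, fst q), t2) \<in> C"
        using C(1) calculation \<open>0 \<le> u\<close> \<open>0 \<le> w\<close> \<open>u + w = 1\<close>
        unfolding convex_def by blast
      moreover have "u * t1 + w * t2 \<le> u * snd p + w * snd q"
        using calculation \<open>0 \<le> u\<close> \<open>0 \<le> w\<close> by (simp add: add_mono mult_left_mono)
      ultimately show "u *\<^sub>R p + w *\<^sub>R q \<in> D"
        unfolding D_def by (cases p, cases q) auto
    qed
    have Dsub: "\<And>y t. (y,t) \<in> D \<Longrightarrow> \<exists>x. f (x,y) \<le> ereal t"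
    proof -
      fix y t assume "(y,t) \<in> D"
      then obtain x t0 where "((x,y),t0) \<in> C" "t0 \<le> t" unfolding D_def by auto
      then have "f (x,y) \<le> ereal t0" using C(2) by (auto simp: epi_def)
      then show "\<exists>x. f (x,y) \<le> ereal t" using \<open>t0 \<le> t\<close> by (meson ereal_less_eq(3) order_trans)
    qed
    define \<pi> where "\<pi> = (\<lambda>z :: ((real^'n) \<times> (real^'p)) \<times> real. (snd (fst z), snd z))"
    have piC: "\<pi> ` C \<subseteq> closure D"
      unfolding \<pi>_def D_def using closure_subset by fastforce
    have "\<pi> ` closure C \<subseteq> closure D"
      by (rule image_closure_subset[OF _ closed_closure piC])
         (unfold \<pi>_def, intro continuous_intros)
    then have inclD: "\<And>x y t. f (x,y) \<le> ereal t \<Longrightarrow> (y,t) \<in> closure D"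
      using C(3) unfolding epi_def \<pi>_def by force
    have up: "\<And>s. s > v \<Longrightarrow> (0, s) \<in> closure D"
    proof -
      fix s assume "s > v"
      then have "V < ereal s" using v by simp
      then obtain x where "f (x,0) < ereal s" unfolding V_def by (auto simp: INF_less_iff)
      then show "(0,s) \<in> closure D" using inclD by (meson less_imp_le)
    qed
    have qcl: "(0, v) \<in> closure D"
    proof -
      have "(0, v) \<in> closure (closure D)"
        unfolding closure_approachable
      proof (intro allI impI)
        fix e :: real assume "e > 0"
        then have "(0, v + e/2) \<in> closure D" by (intro up) simp
        moreover have "dist (0::real^'p, v + e/2) (0, v) < e"
          using \<open>e > 0\<close> by (simp add: dist_Pair_Pair dist_real_def)
        ultimately show "\<exists>y\<in>closure D. dist y (0, v) < e" by blast
      qed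
      then show ?thesis by simp
    qed
    have upD: "\<And>y t s. (y,t) \<in> D \<Longrightarrow> t \<le> s \<Longrightarrow> (y,s) \<in> D"
      unfolding D_def by (auto intro: order_trans)
    have notri: "(0, v) \<notin> rel_interior D"
    proof
      assume "(0, v) \<in> rel_interior D"
      then obtain e where e: "e > 0" "ball (0,v) e \<inter> affine hull D \<subseteq> D" and inD: "(0,v) \<in> D"
        unfolding mem_rel_interior_ball by auto
      have inD1: "(0, v+1) \<in> D" using upD[OF inD] by simp
      have "(1 + e/2) *\<^sub>R (0::real^'p, v) + (- (e/2)) *\<^sub>R (0, v+1) \<in> affine hull D"
        by (rule mem_affine[OF affine_affine_hull]) (use inD inD1 in \<open>auto intro: hull_inc\<close>)
      moreover have "(1 + e/2) *\<^sub>R (0::real^'p, v) + (- (e/2)) *\<^sub>R (0, v+1) = (0, v - e/2)"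
        by (simp add: algebra_simps)
      ultimately have "(0, v - e/2) \<in> affine hull D" by simp
      moreover have "(0::real^'p, v - e/2) \<in> ball (0,v) e"
        using e by (simp add: dist_Pair_Pair dist_real_def)
      ultimately have "(0, v - e/2) \<in> D" using e by blast
      then obtain x where "f (x,0) \<le> ereal (v - e/2)" using Dsub by blast
      moreover have "ereal (v - e/2) < ereal v" using e by simp
      ultimately show False using Vle[of x] by (meson leD order_trans)
    qed
    obtain a where a: "a \<noteq> 0" "\<And>z. z \<in> closure D \<Longrightarrow> a \<bullet> (0,v) \<le> a \<bullet> z"
      "\<And>z. z \<in> rel_interior D \<Longrightarrow> a \<bullet> (0,v) < a \<bullet> z"
      using supporting_hyperplane_relative_frontier[OF convD qcl notri] by blast
    obtain b c where bc: "a = (b, c)" by (cases a)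
    have ineq: "\<And>y t. (y,t) \<in> closure D \<Longrightarrow> c * v \<le> b \<bullet> y + c * t"
    proof -
      fix y t assume "(y,t) \<in> closure D"
      from a(2)[OF this] show "c * v \<le> b \<bullet> y + c * t" using bc by (simp add: inner_Pair)
    qed
    have "c * v \<le> c * (v + 1)" using ineq[OF up[of "v+1"]] by simp
    then have c0: "c \<ge> 0" by (simp add: algebra_simps)
    have "c \<noteq> 0"
    proof
      assume c: "c = 0"
      then have b: "b \<noteq> 0" using a(1) bc by (simp add: zero_prod_def)
      have domge: "\<And>y. y \<in> snd ` edom f \<Longrightarrow> 0 \<le> b \<bullet> y"
      proof -
        fix y assume "y \<in> snd ` edom f"
        then obtain x where "f (x,y) < \<infinity>" by (auto simp: edom_def)
        with fgt[of "(x,y)"] obtain r where "f (x,y) = ereal r" by (cases "f (x,y)") auto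
        then have "(y,r) \<in> closure D" using inclD[of x y r] by simp
        then show "0 \<le> b \<bullet> y" using ineq c by simp
      qed
      obtain \<delta> where d: "\<delta> > 0" "ball 0 \<delta> \<inter> affine hull (snd ` edom f) \<subseteq> snd ` edom f"
        and z0: "0 \<in> snd ` edom f"
        using assms(3) by (auto simp: ri_def)
      have domeq: "\<And>y. y \<in> snd ` edom f \<Longrightarrow> b \<bullet> y = 0"
      proof -
        fix y assume y: "y \<in> snd ` edom f"
        define \<epsilon> where "\<epsilon> = \<delta> / (2 * (norm y + 1))"
        have ny: "norm y + 1 > 0" by (simp add: add_nonneg_pos)
        have ep: "\<epsilon> > 0" using d ny unfolding \<epsilon>_def by simp
        have "(1 + \<epsilon>) *\<^sub>R 0 + (- \<epsilon>) *\<^sub>R y \<in> affine hull (snd ` edom f)"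
          by (rule mem_affine[OF affine_affine_hull]) (use y z0 in \<open>auto intro: hull_inc\<close>)
        then have A: "(- \<epsilon>) *\<^sub>R y \<in> affine hull (snd ` edom f)" by simp
        have "norm ((- \<epsilon>) *\<^sub>R y) = \<epsilon> * norm y" using ep by simp
        also have "\<dots> < \<delta>"
        proof -
          have "\<epsilon> * norm y \<le> \<epsilon> * (norm y + 1)" using ep by simp
          also have "\<dots> = \<delta> / 2" unfolding \<epsilon>_def
            using ny by (simp add: field_simps)
          finally show ?thesis using d by simp
        qed
        finally have "(- \<epsilon>) *\<^sub>R y \<in> ball 0 \<delta>" by simp
        with A d have "(- \<epsilon>) *\<^sub>R y \<in> snd ` edom f" by blast
        then have "0 \<le> b \<bullet> ((- \<epsilon>) *\<^sub>R y)" by (rule domge)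
        then have "0 \<le> - \<epsilon> * (b \<bullet> y)" by simp
        then have "b \<bullet> y \<le> 0" using ep by (simp add: mult_le_0_iff)
        then show "b \<bullet> y = 0" using domge[OF y] by simp
      qed
      have "D \<noteq> {}" using qcl by auto
      then obtain z where z: "z \<in> rel_interior D"
        using rel_interior_eq_empty[OF convD] by blast
      obtain y t where yt: "z = (y,t)" by (cases z)
      have "(y,t) \<in> D" using z yt rel_interior_subset by blast
      then obtain x where "f (x,y) \<le> ereal t" using Dsub by blast
      then have "y \<in> snd ` edom f" unfolding edom_def
      proof -
        assume h: "f (x,y) \<le> ereal t"
        have "f (x,y) < \<infinity>" using le_less_trans[OF h, of \<infinity>] by simp
        then show "y \<in> snd ` {x. f x < \<infinity>}" by (intro image_eqI[where x="(x,y)"]) auto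
      qed
      then have "b \<bullet> y = 0" by (rule domeq)
      then show False using a(3)[OF z] yt bc c by (simp add: inner_Pair)
    qed
    with c0 have cpos: "c > 0" by simp
    define ys where "ys = - (1/c) *\<^sub>R b"
    have "fconj f (0, ys) \<le> - ereal v"
      unfolding fconj_def
    proof (simp only: case_prod_conv, rule SUP_least)
      fix z :: "(real^'n) \<times> (real^'p)"
      obtain x y where z: "z = (x,y)" by (cases z)
      show "(case z of (x, y) \<Rightarrow> ereal (0 \<bullet> x + ys \<bullet> y) - f (x, y)) \<le> - ereal v"
      proof (cases "f (x,y) = \<infinity>")
        case True then show ?thesis using z by simp
      next
        case False
        with fgt[of "(x,y)"] obtain r where r: "f (x,y) = ereal r" by (cases "f (x,y)") auto
        then have "c * v \<le> b \<bullet> y + c * r" using inclD[of x y r] ineq by simp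
        then have "ys \<bullet> y - r \<le> - v" using cpos unfolding ys_def
          by (simp add: field_simps)
        then show ?thesis using z r by simp
      qed
    qed
    then have "ereal v \<le> - fconj f (0, ys)"
      by (metis ereal_minus_le_minus ereal_uminus_uminus)
    also have "\<dots> \<le> (SUP y. - fconj f (0, y))" by (rule SUP_upper) simp
    finally have "V \<le> (SUP y. - fconj f (0, y))" using v by simp
    then show ?thesis using weak_dual[of f] unfolding V_def by (rule antisym)
  qed
qed

end
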